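(* Let $p$ be a prime and $d$ a power of $p$. If $n_0+n_1d=m_0+m_1d$ for integers $0\le n_0<d$ and $n_1,m_0,m_1\ge0$, then $$v_p\!\left(\frac{m_0!\,m_1!}{n_0!\,n_1!}\right)\le (n_1-m_1)\,v_p(d!).$$
   Context: $v_p$ denotes the $p$-adic valuation on $\mathbb{Q}$. *)

theory Defs
  imports "HOL-Computational_Algebra.Computational_Algebra"
begin

text \<open>p-adic valuation on the rationals: for x = a/b in lowest terms (b > 0),
  v_p(x) = v_p(a) - v_p(b). (Value at 0 is irrelevant here; it is 0.)\<close>
definition padic_val_rat :: "nat \<Rightarrow> rat \<Rightarrow> int" where
  "padic_val_rat p x =
     (case quotient_of x of (a, b) \<Rightarrow>
        int (multiplicity (int p) a) - int (multiplicity (int p) b))"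

end

theory Submission
  imports Defs
begin

lemma pv_quot:
  fixes A B :: int and p :: nat
  assumes "prime p" "A > 0" "B > 0"
  shows "padic_val_rat p (of_int A / of_int B)
          = int (multiplicity (int p) A) - int (multiplicity (int p) B)"
proof -
  obtain a b where q: "quotient_of (of_int A / of_int B :: rat) = (a, b)" by (cases "quotient_of (of_int A / of_int B :: rat)") auto
  have bpos: "b > 0" using quotient_of_denom_pos[OF q] .
  have eq: "(of_int A / of_int B :: rat) = of_int a / of_int b" using quotient_of_div[OF q] .
  hence "(of_int (A * b) :: rat) = of_int (a * B)" using assms bpos
    by (simp add: field_simps)
  hence e2: "A * b = a * B" by linarith
  have "a \<noteq> 0" using e2 assms bpos by auto
  have pe: "prime_elem (int p)" using assms(1) by simp
  have "multiplicity (int p) (A*b) = multiplicity (int p) (a*B)" using e2 by simp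
  hence "multiplicity (int p) A + multiplicity (int p) b = multiplicity (int p) a + multiplicity (int p) B"
    using prime_elem_multiplicity_mult_distrib[OF pe] \<open>a \<noteq> 0\<close> assms bpos by simp
  thus ?thesis unfolding padic_val_rat_def q by simp
qed

context
  fixes p k :: nat
  assumes pp: "prime p"
begin

abbreviation v :: "int \<Rightarrow> nat" where "v x \<equiv> multiplicity (int p) x"
abbreviation V :: "nat \<Rightarrow> nat" where "V n \<equiv> multiplicity (int p) (fact n :: int)"

lemma pe: "prime_elem (int p)" using pp by simp

lemma V_Suc: "V (Suc n) = V n + v (int (Suc n))"
proof -
  have "(fact (Suc n) :: int) = fact n * int (Suc n)" by (simp add: algebra_simps)
  hence "V (Suc n) = v (fact n * int (Suc n))" by (simp only:)
  also have "\<dots> = V n + v (int (Suc n))"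
    by (rule prime_elem_multiplicity_mult_distrib[OF pe]) auto
  finally show ?thesis .
qed

lemma v_shift:
  assumes "0 < r" "r < p ^ k"
  shows "v (int (m * p ^ k + r)) = v (int r)"
proof -
  let ?j = "v (int r)"
  have r0: "int r \<noteq> 0" using assms by simp
  have dj: "int p ^ ?j dvd int r" by (rule multiplicity_dvd)
  have "p ^ ?j dvd r" using dj by (metis of_nat_dvd_iff of_nat_power)
  hence "p ^ ?j \<le> r" using assms(1) by (simp add: dvd_imp_le)
  hence "p ^ ?j < p ^ k" using assms(2) by simp
  hence jk: "?j < k" using pp power_less_imp_less_exp prime_gt_1_nat by blast
  have ndj: "\<not> int p ^ Suc ?j dvd int r"
    using multiplicity_lessI r0 pe
    by (metis lessI not_prime_unit power_dvd_iff_le_multiplicity leD prime_elem_def)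
  have "int p ^ Suc ?j dvd int p ^ k" by (rule le_imp_power_dvd) (use jk in simp)
  hence dk1: "int p ^ Suc ?j dvd int (m * p ^ k)" by (simp add: dvd_mult)
  have "int p ^ ?j dvd int p ^ k" by (rule le_imp_power_dvd) (use jk in simp)
  hence dk: "int p ^ ?j dvd int (m * p ^ k)" by (simp add: dvd_mult)
  show ?thesis
  proof (rule multiplicity_eqI)
    show "int p ^ ?j dvd int (m * p ^ k + r)" using dj dk by simp
    show "\<not> int p ^ Suc ?j dvd int (m * p ^ k + r)"
      using ndj dk1 by (metis of_nat_add dvd_add_right_iff)
  qed
qed

lemma V_shift:
  assumes "r < p ^ k"
  shows "V (m * p ^ k + r) = V (m * p ^ k) + V r"
  using assms
proof (induction r)
  case 0 then show ?case by simp
next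
  case (Suc r)
  have "V (m * p ^ k + Suc r) = V (m * p ^ k + r) + v (int (m * p ^ k + Suc r))"
    using V_Suc[of "m * p ^ k + r"] by simp
  also have "v (int (m * p ^ k + Suc r)) = v (int (Suc r))"
    using v_shift[of "Suc r" m] Suc.prems by simp
  finally show ?case using Suc V_Suc[of r] by simp
qed

lemma V_mult: "V (a * p ^ k) = a * V (p ^ k) + V a"
proof (induction a)
  case 0 then show ?case by simp
next
  case (Suc a)
  have pk: "p ^ k > 0" using pp by (simp add: prime_gt_0_nat)
  have "Suc a * p ^ k = Suc (a * p ^ k + (p ^ k - 1))" using pk by (simp add: algebra_simps)
  have "V (Suc (a * p ^ k + (p ^ k - 1))) = V (a * p ^ k + (p ^ k - 1)) + v (int (Suc (a * p ^ k + (p ^ k - 1))))"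
    by (rule V_Suc)
  from this[folded \<open>Suc a * p ^ k = Suc (a * p ^ k + (p ^ k - 1))\<close>]
  have "V (Suc a * p ^ k) = V (a * p ^ k + (p ^ k - 1)) + v (int (Suc a * p ^ k))" .
  also have "V (a * p ^ k + (p ^ k - 1)) = V (a * p ^ k) + V (p ^ k - 1)"
    using V_shift pk by simp
  also have "v (int (Suc a * p ^ k)) = v (int (Suc a)) + k"
  proof -
    have "int (Suc a * p ^ k) = int (Suc a) * int p ^ k" by (simp add: algebra_simps)
    thus ?thesis using prime_elem_multiplicity_mult_distrib[OF pe, of "int (Suc a)" "int p ^ k"] pp
      by (simp add: prime_gt_0_nat)
  qed
  also have "V (p ^ k) = V (p ^ k - 1) + k"
  proof -
    have e: "p ^ k = Suc (p ^ k - 1)" using pk by simp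
    have "V (Suc (p ^ k - 1)) = V (p ^ k - 1) + v (int (Suc (p ^ k - 1)))" by (rule V_Suc)
    from this[folded e] have "V (p ^ k) = V (p ^ k - 1) + v (int (p ^ k))" .
    thus ?thesis using pe by simp
  qed
  ultimately show ?case using Suc.IH V_Suc[of a] by simp
qed

end

theorem lemma2p3:
  fixes p d k n0 n1 m0 m1 :: nat
  assumes "prime p"
    and "d = p ^ k"
    and "n0 < d"
    and "n0 + n1 * d = m0 + m1 * d"
  shows "padic_val_rat p (of_nat (fact m0 * fact m1) / of_nat (fact n0 * fact n1))
           \<le> (int n1 - int m1) * padic_val_rat p (of_nat (fact d))"
proof -
  have pe: "prime_elem (int p)" using assms(1) by simp
  have "m1 * d < (n1 + 1) * d" using assms(3,4) by (simp add: algebra_simps)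
  hence "m1 \<le> n1" by (metis Suc_eq_plus1 less_Suc_eq_le mult_less_cancel2)
  define t where "t = n1 - m1"
  have n1: "n1 = t + m1" using \<open>m1 \<le> n1\<close> t_def by simp
  have m0: "m0 = t * d + n0" using assms(4) n1 by (simp add: algebra_simps)
  let ?V = "\<lambda>n. multiplicity (int p) (fact n :: int)"
  have Vm0: "?V m0 = t * ?V d + ?V t + ?V n0"
    using V_shift[OF assms(1), of n0 k t] V_mult[OF assms(1), of t k] assms m0 by simp
  have dv: "(fact t * fact m1 :: int) dvd fact (t + m1)"
  proof -
    have "fact t * fact (t + m1 - t) * ((t + m1) choose t) = (fact (t + m1) :: nat)"
      by (rule binomial_fact_lemma) simp
    hence "(fact t * fact m1 :: nat) dvd fact (t + m1)" by (metis add_diff_cancel_left' dvdI)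
    hence "int (fact t * fact m1) dvd int (fact (t + m1))" by (simp only: of_nat_dvd_iff)
    thus ?thesis by (simp add: of_nat_fact)
  qed
  have "multiplicity (int p) (fact t * fact m1 :: int) \<le> ?V (t + m1)"
    by (rule dvd_imp_multiplicity_le[OF dv]) simp
  hence ineq: "?V t + ?V m1 \<le> ?V n1"
    using prime_elem_multiplicity_mult_distrib[OF pe, of "fact t :: int" "fact m1"] n1 by simp
  have L: "padic_val_rat p (of_nat (fact m0 * fact m1) / of_nat (fact n0 * fact n1))
      = int (multiplicity (int p) (fact m0 * fact m1 :: int)) - int (multiplicity (int p) (fact n0 * fact n1 :: int))"
  proof -
    have e1: "(of_nat (fact m0 * fact m1) / of_nat (fact n0 * fact n1) :: rat)
       = of_int (int (fact m0 * fact m1)) / of_int (int (fact n0 * fact n1))" by simp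
    have e2: "int (fact m0 * fact m1) = (fact m0 * fact m1 :: int)" by (simp only: of_nat_mult of_nat_fact)
    have e3: "int (fact n0 * fact n1) = (fact n0 * fact n1 :: int)" by (simp only: of_nat_mult of_nat_fact)
    show ?thesis unfolding e1 using pv_quot[OF assms(1), of "int (fact m0 * fact m1)" "int (fact n0 * fact n1)"]
      unfolding e2 e3 by simp
  qed
  have R: "padic_val_rat p (of_nat (fact d)) = int (?V d)"
  proof -
    have e1: "(of_nat (fact d) :: rat) = of_int (int (fact d)) / of_int 1" by simp
    have e2: "int (fact d) = (fact d :: int)" by (simp only: of_nat_fact)
    show ?thesis unfolding e1 using pv_quot[OF assms(1), of "int (fact d)" 1]
      unfolding e2 by simp
  qed
  have "int (multiplicity (int p) (fact m0 * fact m1 :: int)) - int (multiplicity (int p) (fact n0 * fact n1 :: int))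
        = int (?V m0) + int (?V m1) - int (?V n0) - int (?V n1)"
    using prime_elem_multiplicity_mult_distrib[OF pe, of "fact m0 :: int" "fact m1"]
          prime_elem_multiplicity_mult_distrib[OF pe, of "fact n0 :: int" "fact n1"] by simp
  also have "\<dots> \<le> int t * int (?V d)" using Vm0 ineq by simp
  finally show ?thesis using L R t_def \<open>m1 \<le> n1\<close> by simp
qed

end
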